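(* Let $(\mathcal{D}_1,\mathcal{D}_2,\dots)$ be a data stream for which at least one $f\in\mathcal{F}$ is consistent with every $\mathcal{D}_t$. Then: (i) $\mathsf{P}(\mathcal{D}_t)\supseteq\mathsf{P}(\mathcal{D}_{t+1})$ for all $t$; (ii) $\mathsf{P}(\mathcal{D}_\infty):=\left(\bigcap_{k=1}^\infty\mathsf{P}(\mathcal{D}_k)\right)\cap\mathsf{K}$ is non-empty; (iii) if $\theta_t\in\mathsf{P}(\mathcal{D}_t)$ for all $t$ and $\lim_{t\to\infty}\theta_t=\theta_\infty$, then $\theta_\infty\in\mathsf{P}(\mathcal{D}_\infty)$.
   Context: $\mathcal{F}$ is a set of functions $\mathbb{N}\times\mathcal{X}\times\mathcal{U}\to\mathcal{X}$ with compact parametrization $(\mathbb{T},\mathsf{K},d)$: $(\mathsf{K},d)$ compact metric space, $\mathbb{T}:\mathsf{K}\to2^{\mathcal{F}}$, $\mathcal{F}\subseteq\bigcup_\theta\mathbb{T}[\theta]$. A data stream is a sequence $\mathcal{D}_t=(d_1,\dots,d_t)$ of data sets formed from observations $d_i=(t_i,x^+_i,x_i,u_i)$; $f$ is consistent with $\mathcal{D}$ if $x^+=f(t,x,u)$ for all $(t,x^+,x,u)\in\mathcal{D}$. $\mathsf{P}(\mathcal{D})$ is the closure of $\{\theta\in\mathsf{K}:\exists f\in\mathbb{T}[\theta]\text{ consistent with }\mathcal{D}\}$. *)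

theory Defs
  imports "HOL-Analysis.Analysis"
begin

text \<open>Observations are tuples (t, x_plus, x, u); a data set is a set of observations.\<close>
type_synonym ('x, 'u) obs = "nat \<times> 'x \<times> 'x \<times> 'u"

definition consistent :: "(nat \<Rightarrow> 'x \<Rightarrow> 'u \<Rightarrow> 'x) \<Rightarrow> ('x, 'u) obs set \<Rightarrow> bool" where
  "consistent f D \<longleftrightarrow> (\<forall>(t, xp, x, u) \<in> D. xp = f t x u)"

definition data_set :: "(nat \<Rightarrow> ('x, 'u) obs) \<Rightarrow> nat \<Rightarrow> ('x, 'u) obs set" where
  "data_set d t = d ` {1..t}"

definition param_set :: "'k::metric_space set \<Rightarrow> ('k \<Rightarrow> (nat \<Rightarrow> 'x \<Rightarrow> 'u \<Rightarrow> 'x) set)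
    \<Rightarrow> ('x, 'u) obs set \<Rightarrow> 'k set" where
  "param_set K T D = closure {\<theta> \<in> K. \<exists>f \<in> T \<theta>. consistent f D}"

end

theory Submission
  imports Defs
begin

lemma cons_anti: "consistent f B \<Longrightarrow> A \<subseteq> B \<Longrightarrow> consistent f A"
  unfolding consistent_def by (meson Ball_def subsetD)

lemma ps_mono:
  assumes "s \<le> t"
  shows "param_set K T (data_set d t) \<subseteq> param_set K T (data_set d s)"
proof -
  have sub: "data_set d s \<subseteq> data_set d t" using assms unfolding data_set_def by auto
  have "{\<theta> \<in> K. \<exists>f \<in> T \<theta>. consistent f (data_set d t)} \<subseteq> {\<theta> \<in> K. \<exists>f \<in> T \<theta>. consistent f (data_set d s)}"
    using cons_anti[OF _ sub] by blast
  then show ?thesis unfolding param_set_def by (rule closure_mono)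
qed

lemma ps_K:
  assumes "compact K"
  shows "param_set K T D \<subseteq> K"
proof -
  have "closed K" using assms compact_imp_closed by auto
  then show ?thesis unfolding param_set_def
    by (intro closure_minimal) auto
qed

theorem mainTheorem13:
  fixes K :: "'k::metric_space set"
    and T :: "'k \<Rightarrow> (nat \<Rightarrow> 'x \<Rightarrow> 'u \<Rightarrow> 'x) set"
    and F :: "(nat \<Rightarrow> 'x \<Rightarrow> 'u \<Rightarrow> 'x) set"
    and d :: "nat \<Rightarrow> ('x, 'u) obs"
  assumes K_compact: "compact K"
    and T_into_F: "\<forall>\<theta>\<in>K. T \<theta> \<subseteq> F"
    and F_covered: "F \<subseteq> (\<Union>\<theta>\<in>K. T \<theta>)"
    and consistent_exists: "\<exists>f\<in>F. \<forall>t\<ge>1. consistent f (data_set d t)"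
  shows "(\<forall>t\<ge>1. param_set K T (data_set d (t + 1)) \<subseteq> param_set K T (data_set d t))
    \<and> (\<Inter>k\<in>{1..}. param_set K T (data_set d k)) \<inter> K \<noteq> {}
    \<and> (\<forall>(\<theta>::nat \<Rightarrow> 'k) \<theta>_inf. (\<forall>t\<ge>1. \<theta> t \<in> param_set K T (data_set d t)) \<and> \<theta> \<longlonglongrightarrow> \<theta>_inf
          \<longrightarrow> \<theta>_inf \<in> (\<Inter>k\<in>{1..}. param_set K T (data_set d k)) \<inter> K)"
proof (intro conjI allI impI)
  fix t :: nat
  show "param_set K T (data_set d (t + 1)) \<subseteq> param_set K T (data_set d t)"
    by (rule ps_mono) simp
next
  obtain f where f: "f \<in> F" "\<forall>t\<ge>1. consistent f (data_set d t)" using consistent_exists by blast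
  have "f \<in> (\<Union>\<theta>\<in>K. T \<theta>)" using F_covered f(1) by (rule subsetD)
  then obtain \<theta>0 where th: "\<theta>0 \<in> K" "f \<in> T \<theta>0" by (rule UN_E)
  have "\<theta>0 \<in> param_set K T (data_set d k)" if "k \<ge> 1" for k
  proof -
    have "consistent f (data_set d k)" using f(2) that by simp
    then have "\<theta>0 \<in> {\<theta> \<in> K. \<exists>f \<in> T \<theta>. consistent f (data_set d k)}" using th by auto
    then show ?thesis unfolding param_set_def using closure_subset by (rule subsetD[rotated])
  qed
  then show "(\<Inter>k\<in>{1..}. param_set K T (data_set d k)) \<inter> K \<noteq> {}" using th by auto
next
  fix \<theta> :: "nat \<Rightarrow> 'k" and \<theta>_inf
  assume a: "(\<forall>t\<ge>1. \<theta> t \<in> param_set K T (data_set d t)) \<and> \<theta> \<longlonglongrightarrow> \<theta>_inf"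
  have mem: "\<theta>_inf \<in> param_set K T (data_set d k)" if "k \<ge> 1" for k
  proof -
    have "(\<lambda>n. \<theta> (n + k)) \<longlonglongrightarrow> \<theta>_inf" using LIMSEQ_ignore_initial_segment[OF conjunct2[OF a]] .
    moreover have "\<forall>n. \<theta> (n + k) \<in> param_set K T (data_set d k)"
    proof
      fix n
      have A: "\<forall>t\<ge>1. \<theta> t \<in> param_set K T (data_set d t)" using a by (rule conjunct1)
      have nk: "1 \<le> n + k" using that by simp
      have B: "\<theta> (n + k) \<in> param_set K T (data_set d (n + k))" using A nk by blast
      have C: "param_set K T (data_set d (n + k)) \<subseteq> param_set K T (data_set d k)"
        by (rule ps_mono) simp
      show "\<theta> (n + k) \<in> param_set K T (data_set d k)" using B C by (rule subsetD[rotated])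
    qed
    moreover have "closed (param_set K T (data_set d k))" unfolding param_set_def by simp
    ultimately show ?thesis using closed_sequentially[where f="\<lambda>n. \<theta> (n + k)"] by simp
  qed
  have "\<theta>_inf \<in> K" using mem[of 1] ps_K[OF K_compact] by auto
  then show "\<theta>_inf \<in> (\<Inter>k\<in>{1..}. param_set K T (data_set d k)) \<inter> K" using mem by auto
qed

end
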